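(* Let $n\ge1$ and let $(X_t)_{t\ge0}$ be the classical occupancy Markov chain on $\{0,\dots,n\}$: $\Pr(X_{t+1}=i\mid X_t=i)=i/n$, $\Pr(X_{t+1}=i+1\mid X_t=i)=(n-i)/n$. Then for all integers $0\le r\le k<n$ and $t\ge0$, $$\Pr(X_t\le k\mid X_0=r)=\frac{n-k}{n^t}\binom{n-r}{n-k}\sum_{j=0}^{k-r}(-1)^{k-r-j}\binom{k-r}{j}\frac{(r+j)^t}{n-r-j};$$ moreover $\Pr(X_t\le n\mid X_0=r)=1$ for all $0\le r\le n$, and $\Pr(X_t\le k\mid X_0=r)=0$ if $k<r$.
   Context: Convention $0^0=1$. *)

theory Defs
  imports Complex_Main
begin

definition occ_trans :: "nat \<Rightarrow> nat \<Rightarrow> nat \<Rightarrow> real" where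
  "occ_trans n i j =
     (if j = i then real i / real n
      else if j = Suc i then (real n - real i) / real n
      else 0)"

fun occ_dist :: "nat \<Rightarrow> nat \<Rightarrow> nat \<Rightarrow> nat \<Rightarrow> real" where
  "occ_dist n 0 r j = (if j = r then 1 else 0)"
| "occ_dist n (Suc t) r j = (\<Sum>i\<in>{0..n}. occ_dist n t r i * occ_trans n i j)"

definition occ_cdf :: "nat \<Rightarrow> nat \<Rightarrow> nat \<Rightarrow> nat \<Rightarrow> real" where
  "occ_cdf n t r k = (\<Sum>i\<in>{0..k}. occ_dist n t r i)"

end

theory Submission
  imports Defs
begin

lemma trans_split: "occ_trans n i j = (if i = j then real j / real n else 0) + (if Suc i = j then (real n - real i) / real n else 0)"
  unfolding occ_trans_def by auto

lemma support: "r \<le> n \<Longrightarrow> (j < r \<or> j > n) \<Longrightarrow> occ_dist n t r j = 0"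
proof (induction t arbitrary: j)
  case 0 then show ?case by auto
next
  case (Suc t)
  have "occ_dist n (Suc t) r j = (\<Sum>i\<in>{0..n}. occ_dist n t r i * occ_trans n i j)" by simp
  also have "\<dots> = 0"
  proof (rule sum.neutral, rule ballI)
    fix i assume i: "i \<in> {0..n}"
    show "occ_dist n t r i * occ_trans n i j = 0"
    proof (cases "j = i \<or> j = Suc i")
      case True
      then show ?thesis
      proof
        assume "j = i" then show ?thesis using Suc i by auto
      next
        assume ji: "j = Suc i"
        show ?thesis
        proof (cases "j > n")
          case True then have "i = n" using i ji by auto
          then show ?thesis using ji by (simp add: occ_trans_def)
        next
          case False then have "i < r" using Suc.prems ji by auto
          then show ?thesis using Suc by auto
        qed
      qed
    next
      case False then show ?thesis by (simp add: occ_trans_def)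
    qed
  qed
  finally show ?case .
qed

lemma step: assumes "r \<le> n"
  shows "occ_dist n (Suc t) r j = occ_dist n t r j * real j / real n +
     (if j = 0 then 0 else occ_dist n t r (j - 1) * (real n - real (j - 1)) / real n)"
proof -
  let ?d = "occ_dist n t r"
  have "occ_dist n (Suc t) r j = (\<Sum>i\<in>{0..n}. ?d i * occ_trans n i j)" by simp
  also have "\<dots> = (\<Sum>i\<in>{0..n}. (if i = j then ?d i * real j / real n else 0))
      + (\<Sum>i\<in>{0..n}. (if Suc i = j then ?d i * (real n - real i) / real n else 0))"
    unfolding sum.distrib[symmetric] by (intro sum.cong) (auto simp: occ_trans_def)
  also have "(\<Sum>i\<in>{0..n}. (if i = j then ?d i * real j / real n else 0)) = ?d j * real j / real n"
    using support[OF assms, of j t] by (auto simp: sum.delta)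
  also have "(\<Sum>i\<in>{0..n}. (if Suc i = j then ?d i * (real n - real i) / real n else 0))
     = (if j = 0 then 0 else ?d (j - 1) * (real n - real (j - 1)) / real n)"
  proof (cases j)
    case 0 then show ?thesis by simp
  next
    case (Suc i0)
    have "(\<Sum>i\<in>{0..n}. (if Suc i = j then ?d i * (real n - real i) / real n else 0))
       = (\<Sum>i\<in>{0..n}. (if i = i0 then ?d i * (real n - real i) / real n else 0))"
      using Suc by (intro sum.cong) auto
    also have "\<dots> = ?d i0 * (real n - real i0) / real n"
      using support[OF assms, of i0 t] by (auto simp: sum.delta)
    finally show ?thesis using Suc by simp
  qed
  finally show ?thesis .
qed

lemma cdf_step: assumes "r \<le> n" "k \<le> n" and np: "n > 0"
  shows "occ_cdf n (Suc t) r k = occ_cdf n t r k - (real n - real k) / real n * occ_dist n t r k"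
  using assms(2)
proof (induction k)
  case 0
  have "occ_dist n (Suc t) r 0 = 0" by (simp only: step[OF assms(1)]) simp
  then show ?case using np by (simp add: occ_cdf_def del: occ_dist.simps)
next
  case (Suc k)
  have "occ_cdf n (Suc t) r (Suc k) = occ_cdf n (Suc t) r k + occ_dist n (Suc t) r (Suc k)"
    by (simp add: occ_cdf_def)
  moreover have "occ_cdf n t r (Suc k) = occ_cdf n t r k + occ_dist n t r (Suc k)"
    by (simp add: occ_cdf_def)
  moreover have "n > 0" using Suc by auto
  moreover have "occ_dist n (Suc t) r (Suc k) = occ_dist n t r (Suc k) * real (Suc k) / real n +
     occ_dist n t r k * (real n - real k) / real n" by (simp only: step[OF assms(1)]) simp
  moreover have "occ_dist n t r (Suc k) * real (Suc k) / real n = occ_dist n t r (Suc k) - (real n - real (Suc k)) / real n * occ_dist n t r (Suc k)"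
    using np by (simp add: field_simps)
  moreover have "(real n - real k) / real n * occ_dist n t r k = occ_dist n t r k * (real n - real k) / real n" by simp
  ultimately show ?case using Suc by linarith
qed

definition D :: "nat \<Rightarrow> (nat \<Rightarrow> real) \<Rightarrow> real" where
  "D m f = (\<Sum>j\<le>m. (-1)^(m-j) * real (m choose j) * f j)"

lemma D_shift: "D (Suc m) f = D m (\<lambda>j. f (Suc j) - f j)"
proof -
  have sgn: "(-1::real)^(m-j) * real (m choose Suc j) = - ((-1)^(m - Suc j) * real (m choose Suc j))" for j
  proof (cases "j < m")
    case True
    then have "m - j = Suc (m - Suc j)" by auto
    then show ?thesis by simp
  next
    case False then show ?thesis by simp
  qed
  have A: "D (Suc m) f = (-1)^(Suc m) * f 0 + (\<Sum>j\<le>m. (-1)^(m-j) * real (m choose j) * f (Suc j))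
     + (\<Sum>j\<le>m. (-1)^(m-j) * real (m choose Suc j) * f (Suc j))"
    unfolding D_def sum.atMost_Suc_shift by (simp add: sum.distrib algebra_simps)
  have B: "D m f = (\<Sum>j\<le>Suc m. (-1)^(m-j) * real (m choose j) * f j)"
    unfolding D_def by (simp add: sum.atMost_Suc)
  also have "\<dots> = (-1)^m * f 0 + (\<Sum>j\<le>m. (-1)^(m - Suc j) * real (m choose Suc j) * f (Suc j))"
    unfolding sum.atMost_Suc_shift by simp
  finally have B: "D m f = (-1)^m * f 0 - (\<Sum>j\<le>m. (-1)^(m - j) * real (m choose Suc j) * f (Suc j))"
    by (simp add: sgn sum_negf)
  have C: "D m (\<lambda>j. f (Suc j) - f j) = (\<Sum>j\<le>m. (-1)^(m-j) * real (m choose j) * f (Suc j)) - D m f"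
    unfolding D_def by (simp add: sum_subtractf algebra_simps)
  show ?thesis using A B C by simp
qed

lemma D_diff: "D m (\<lambda>j. f j - g j) = D m f - D m g"
  unfolding D_def by (simp add: sum_subtractf algebra_simps)

lemma D_base: "m < N \<Longrightarrow> D m (\<lambda>j. 1 / real (N - j)) = 1 / (real (N - m) * real (N choose m))"
proof (induction m arbitrary: N)
  case 0 then show ?case by (simp add: D_def)
next
  case (Suc m)
  have e: "(\<lambda>j. 1 / real (N - Suc j) - 1 / real (N - j)) = (\<lambda>j. 1 / real ((N - 1) - j) - 1 / real (N - j))"
    by auto
  have "D (Suc m) (\<lambda>j. 1 / real (N - j)) = D m (\<lambda>j. 1 / real ((N - 1) - j)) - D m (\<lambda>j. 1 / real (N - j))"
    by (simp only: D_shift e D_diff)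
  also have "\<dots> = 1 / (real (N - 1 - m) * real ((N - 1) choose m)) - 1 / (real (N - m) * real (N choose m))"
    using Suc.IH[of "N - 1"] Suc.IH[of N] Suc.prems by (simp del: of_nat_diff)
  also have "\<dots> = 1 / (real (N - Suc m) * real (N choose Suc m))"
  proof -
    define c where "c = real ((N - 1) choose m)"
    have cpos: "c > 0" unfolding c_def using Suc.prems by simp
    have h1: "real (N - m) * real (N choose m) = real N * c"
      unfolding c_def using binomial_absorb_comp[of N m] by (metis of_nat_mult)
    have h2: "real (Suc m) * real (N choose Suc m) = real N * c"
      unfolding c_def using binomial_absorption[of m N] by (metis of_nat_mult)
    have h3: "real (N choose Suc m) = real N * c / real (Suc m)" using h2
      by (simp add: field_simps)
    have r1: "real (N - 1 - m) = real N - 1 - real m" using Suc.prems by auto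
    have r2: "real (N - Suc m) = real N - 1 - real m" using Suc.prems by auto
    have Np: "real N - 1 - real m > 0" using Suc.prems by auto
    have N0: "real N > 0" using Suc.prems by auto
    have alg: "\<And>a c x y::real. a > 0 \<Longrightarrow> c > 0 \<Longrightarrow> x > 0 \<Longrightarrow> y = x - a \<Longrightarrow>
       1/(a*c) - 1/(x*c) = 1/(a*(x*c/y))"
      by (simp add: field_simps)
    show ?thesis unfolding h1 h3 r1 r2 c_def[symmetric]
      by (rule alg[OF Np cpos N0]) simp
  qed
  finally show ?case .
qed

lemma D_lin: "D (Suc p) (\<lambda>j. (real j - real (Suc p)) * h j) = real (Suc p) * D p h"
proof -
  have "D (Suc p) (\<lambda>j. (real j - real (Suc p)) * h j)
     = (\<Sum>j\<le>p. (-1)^(Suc p-j) * real (Suc p choose j) * ((real j - real (Suc p)) * h j))"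
    unfolding D_def by (simp add: sum.atMost_Suc)
  also have "\<dots> = (\<Sum>j\<le>p. real (Suc p) * ((-1)^(p-j) * real (p choose j) * h j))"
  proof (rule sum.cong[OF refl])
    fix j assume "j \<in> {..p}"
    then have jp: "j \<le> p" by simp
    have e1: "Suc p - j = Suc (p - j)" using jp by auto
    have e2: "real (Suc p - j) * real (Suc p choose j) = real (Suc p) * real (p choose j)"
      using binomial_absorb_comp[of "Suc p" j] by (metis diff_Suc_1 of_nat_mult)
    have e3: "real j - real (Suc p) = - real (Suc p - j)" using jp by auto
    show "(-1)^(Suc p-j) * real (Suc p choose j) * ((real j - real (Suc p)) * h j)
        = real (Suc p) * ((-1)^(p-j) * real (p choose j) * h j)"
    proof -
      have "(-1::real)^(Suc p-j) * real (Suc p choose j) * ((real j - real (Suc p)) * h j)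
         = (-1)^(p-j) * (real (Suc p - j) * real (Suc p choose j)) * h j"
        unfolding e1 e3 by (simp only: power_Suc) (simp add: algebra_simps)
      also have "\<dots> = real (Suc p) * ((-1)^(p-j) * real (p choose j) * h j)"
        unfolding e2 by (simp only: ac_simps)
      finally show ?thesis .
    qed
  qed
  also have "\<dots> = real (Suc p) * D p h" unfolding D_def by (simp add: sum_distrib_left)
  finally show ?thesis .
qed

definition G :: "nat \<Rightarrow> nat \<Rightarrow> nat \<Rightarrow> nat \<Rightarrow> real" where
  "G n r t k = (real (n - k) / real n ^ t) * real ((n - r) choose (n - k)) *
              (\<Sum>j=0..k - r. (-1) ^ (k - r - j) * real ((k - r) choose j) *
                   real (r + j) ^ t / real (n - r - j))"

lemma G_D: "G n r t k = real (n - k) / real n ^ t * real ((n - r) choose (n - k)) *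
   D (k - r) (\<lambda>j. real (r + j) ^ t / real (n - r - j))"
  unfolding G_def D_def atLeast0AtMost by (simp add: times_divide_eq_right)

lemma D_lin2: "D m (\<lambda>j. (c + e j) * g j) = c * D m g + D m (\<lambda>j. e j * g j)"
  unfolding D_def by (simp add: sum.distrib sum_distrib_left algebra_simps)

lemma G0: assumes "r \<le> k" "k < n" shows "G n r 0 k = 1"
proof -
  have m: "k - r < n - r" using assms by auto
  have "G n r 0 k = real (n - k) * real ((n - r) choose (n - k)) * D (k - r) (\<lambda>j. 1 / real (n - r - j))"
    unfolding G_D by simp
  also have "\<dots> = real (n - k) * real ((n - r) choose (n - k)) / (real (n - r - (k - r)) * real ((n - r) choose (k - r)))"
    using D_base[OF m] by simp
  also have "n - r - (k - r) = n - k" using assms by auto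
  also have "(n - r) choose (n - k) = (n - r) choose (k - r)"
    using binomial_symmetric[of "k - r" "n - r"] assms by (simp add: \<open>n - r - (k - r) = n - k\<close>)
  finally show ?thesis using assms by simp
qed

lemma Gr: assumes "r < n" shows "G n r t r = (real r / real n) ^ t"
  using assms unfolding G_def by (simp add: power_divide)

lemma binom_id: assumes "0 < m" "m \<le> N"
  shows "m * (N choose (N - m)) = (N - m + 1) * (N choose (N - m + 1))"
proof -
  obtain p where p: "m = Suc p" using assms by (cases m) auto
  have s1: "N choose (N - m) = N choose m" using binomial_symmetric[OF assms(2)] by simp
  have s2: "N choose (N - m + 1) = N choose p"
    using binomial_symmetric[of p N] assms p by (simp add: Suc_diff_Suc)
  have e: "N - m + 1 = N - p" using assms p by auto
  have "m * (N choose (N - m)) = Suc p * (N choose Suc p)" using s1 p by simp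
  also have "\<dots> = N * ((N - 1) choose p)" by (rule binomial_absorption)
  also have "\<dots> = (N - p) * (N choose p)" by (rule binomial_absorb_comp[symmetric])
  also have "\<dots> = (N - m + 1) * (N choose (N - m + 1))" using s2 e by simp
  finally show ?thesis .
qed

lemma G_step: assumes "r < k" "k < n"
  shows "G n r (Suc t) k = real k / real n * G n r t k + (real n - real k) / real n * G n r t (k - 1)"
proof -
  define p where "p = k - r - 1"
  have m: "k - r = Suc p" using assms p_def by auto
  have km1: "k - 1 - r = p" using assms p_def by auto
  define g where "g = (\<lambda>j. real (r + j) ^ t / real (n - r - j))"
  define X where "X = real ((n - r) choose (n - k))"
  define Y where "Y = real ((n - r) choose (n - (k - 1)))"
  have XY: "real (Suc p) * X = real (n - (k - 1)) * Y"
  proof -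
    have "Suc p * ((n - r) choose (n - r - Suc p)) = (n - r - Suc p + 1) * ((n - r) choose (n - r - Suc p + 1))"
      by (rule binom_id) (use assms m in auto)
    moreover have "n - r - Suc p = n - k" using assms m by auto
    moreover have "n - k + 1 = n - (k - 1)" using assms by auto
    ultimately show ?thesis unfolding X_def Y_def by (metis of_nat_mult)
  qed
  have gs: "(\<lambda>j. real (r + j) ^ Suc t / real (n - r - j)) = (\<lambda>j. (real k + (real j - real (Suc p))) * g j)"
    using assms m unfolding g_def by (auto simp: fun_eq_iff)
  have D1: "D (k - r) (\<lambda>j. real (r + j) ^ Suc t / real (n - r - j)) = real k * D (Suc p) g + real (Suc p) * D p g"
    unfolding gs m D_lin2 D_lin ..
  have L: "G n r (Suc t) k = real (n - k) / real n ^ Suc t * X * (real k * D (Suc p) g + real (Suc p) * D p g)"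
    unfolding G_D D1 X_def ..
  have R1: "G n r t k = real (n - k) / real n ^ t * X * D (Suc p) g"
    unfolding G_D m X_def g_def ..
  have R2: "G n r t (k - 1) = real (n - (k - 1)) / real n ^ t * Y * D p g"
    unfolding G_D km1 Y_def g_def ..
  have nk: "real n - real k = real (n - k)" using assms by auto
  have np: "real n > 0" using assms by auto
  show ?thesis unfolding L R1 R2 nk
  proof -
    have "real (n - k) / real n ^ Suc t * X * (real k * D (Suc p) g + real (Suc p) * D p g)
      = real k / real n * (real (n - k) / real n ^ t * X * D (Suc p) g)
        + real (n - k) / real n * (real (Suc p) * X) * D p g / real n ^ t"
      using np by (simp add: field_simps)
    also have "\<dots> = real k / real n * (real (n - k) / real n ^ t * X * D (Suc p) g)
        + real (n - k) / real n * (real (n - (k - 1)) / real n ^ t * Y * D p g)"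
      unfolding XY by (simp add: field_simps)
    finally show "real (n - k) / real n ^ Suc t * X * (real k * D (Suc p) g + real (Suc p) * D p g) =
      real k / real n * (real (n - k) / real n ^ t * X * D (Suc p) g) +
      real (n - k) / real n * (real (n - (k - 1)) / real n ^ t * Y * D p g)" .
  qed
qed

lemma cdf_below: "r \<le> n \<Longrightarrow> k < r \<Longrightarrow> occ_cdf n t r k = 0"
  unfolding occ_cdf_def using support by (intro sum.neutral) auto

lemma cdf_total: "r \<le> n \<Longrightarrow> 0 < n \<Longrightarrow> occ_cdf n t r n = 1"
proof (induction t)
  case 0 then show ?case by (simp add: occ_cdf_def)
next
  case (Suc t) then show ?case using cdf_step[of r n n t] by simp
qed

lemma cdf_diff: "0 < k \<Longrightarrow> occ_dist n t r k = occ_cdf n t r k - occ_cdf n t r (k - 1)"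
  unfolding occ_cdf_def by (cases k) auto

lemma cdf_main: "r \<le> k \<Longrightarrow> k < n \<Longrightarrow> occ_cdf n t r k = G n r t k"
proof (induction t arbitrary: k)
  case 0 then show ?case using G0[of r k n] by (simp add: occ_cdf_def)
next
  case (Suc t)
  have np: "real n > 0" using Suc by auto
  have st: "occ_cdf n (Suc t) r k = occ_cdf n t r k - (real n - real k) / real n * occ_dist n t r k"
    by (rule cdf_step) (use Suc in auto)
  show ?case
  proof (cases "k = r")
    case True
    have d: "occ_dist n t r r = occ_cdf n t r r"
    proof (cases "r = 0")
      case True then show ?thesis by (simp add: occ_cdf_def)
    next
      case False
      then show ?thesis using cdf_diff[of r n t r] cdf_below[of r n "r - 1" t] Suc by auto
    qed
    have "occ_cdf n (Suc t) r r = real r / real n * occ_cdf n t r r"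
      using st d True np by (simp add: field_simps)
    also have "\<dots> = real r / real n * (real r / real n) ^ t" using Suc True Gr[of r n t] by simp
    finally show ?thesis using True Gr[of r n "Suc t"] Suc by simp
  next
    case False
    then have rk: "r < k" using Suc by auto
    have ih1: "occ_cdf n t r k = G n r t k" using Suc by auto
    have ih2: "occ_cdf n t r (k - 1) = G n r t (k - 1)" using Suc rk by auto
    have d: "occ_dist n t r k = occ_cdf n t r k - occ_cdf n t r (k - 1)" using cdf_diff rk by auto
    have "occ_cdf n (Suc t) r k = real k / real n * occ_cdf n t r k + (real n - real k) / real n * occ_cdf n t r (k - 1)"
      using st d np by (simp add: field_simps)
    then show ?thesis using G_step[OF rk Suc.prems(2)] ih1 ih2 by simp
  qed
qed

theorem mainTheorem14:
  fixes n :: nat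
  assumes "n \<ge> 1"
  shows "(\<forall>r k t. r \<le> k \<and> k < n \<longrightarrow>
            occ_cdf n t r k =
              (real (n - k) / real n ^ t) * real ((n - r) choose (n - k)) *
              (\<Sum>j=0..k - r. (-1) ^ (k - r - j) * real ((k - r) choose j) *
                   real (r + j) ^ t / real (n - r - j)))
       \<and> (\<forall>r t. r \<le> n \<longrightarrow> occ_cdf n t r n = 1)
       \<and> (\<forall>r k t. r \<le> n \<and> k < r \<longrightarrow> occ_cdf n t r k = 0)"
  using cdf_main[unfolded G_def] cdf_total cdf_below assms by auto

end
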